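(* Every finitely generated $L^0(Y)$-submodule $\mathcal M$ of $L^2(X|Y)$ is closed with respect to the metric $d_{X|Y}$.
   Context: $(X,\mu)$ is a probability algebra ($\sigma$-complete Boolean algebra with strictly positive countably additive probability measure, not necessarily separable) and $Y\subseteq X$ a $\sigma$-complete subalgebra with $\nu=\mu|_Y$. $\tilde X,\tilde Y$ are the Stone spaces, $\tilde\mu,\tilde\nu$ the induced Baire–Radon probability measures, $\tilde\pi:\tilde X\to\tilde Y$ the induced continuous surjection; $L^0(X)$ is the space of a.e.-classes of complex Baire-measurable functions on $\tilde X$, and $L^0(Y)$ is identified with a subring of $L^0(X)$ via $g\mapsto g\circ\tilde\pi$; $\mathbb E(\cdot|Y)$ is conditional expectation (for nonnegative functions with values in $[0,\infty]$). $L^2(X|Y):=\{f\in L^0(X):\mathbb E(|f|^2|Y)<\infty\text{ a.e.}\}$, $\|f\|_{X|Y}:=\mathbb E(|f|^2|Y)^{1/2}$, and $d_{X|Y}(f,g):=\int_{\tilde Y}\min(1,\|f-g\|_{X|Y})\,d\tilde\nu$. A finitely generated $L^0(Y)$-submodule of $L^2(X|Y)$ is a set $\{\sum_{g\in F}a_gg:a_g\in L^0(Y)\}$ for some finite $F\subseteq L^2(X|Y)$. *)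

theory Defs
  imports "HOL-Probability.Probability"
begin

definition cond_norm :: "'a measure \<Rightarrow> 'a measure \<Rightarrow> ('a \<Rightarrow> complex) \<Rightarrow> 'a \<Rightarrow> ennreal" where
  "cond_norm M F f x =
     (let e = nn_cond_exp M F (\<lambda>y. ennreal ((cmod (f y))\<^sup>2)) x
      in if e = \<infinity> then \<infinity> else ennreal (sqrt (enn2real e)))"

definition L2_cond :: "'a measure \<Rightarrow> 'a measure \<Rightarrow> ('a \<Rightarrow> complex) set" where
  "L2_cond M F = {f. f \<in> borel_measurable M \<and>
      (AE x in M. nn_cond_exp M F (\<lambda>y. ennreal ((cmod (f y))\<^sup>2)) x < \<infinity>)}"

definition d_cond :: "'a measure \<Rightarrow> 'a measure \<Rightarrow> ('a \<Rightarrow> complex) \<Rightarrow> ('a \<Rightarrow> complex) \<Rightarrow> real" where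
  "d_cond M F f g =
     enn2real (\<integral>\<^sup>+ x. min 1 (cond_norm M F (\<lambda>y. f y - g y) x) \<partial>(restr_to_subalg M F))"

text \<open>The L0(F)-submodule generated by a finite set G (as a set of representatives,
  saturated under M-a.e. equality).\<close>
definition gen_module :: "'a measure \<Rightarrow> 'a measure \<Rightarrow> ('a \<Rightarrow> complex) set \<Rightarrow> ('a \<Rightarrow> complex) set" where
  "gen_module M F G = {h. h \<in> borel_measurable M \<and>
      (\<exists>a. (\<forall>g\<in>G. a g \<in> borel_measurable F) \<and>
           (AE x in M. h x = (\<Sum>g\<in>G. a g x * g x)))}"

end

theory Submission
  imports Defs
begin

lemma borel_measurable_cnj[measurable]:
  fixes f :: "'b \<Rightarrow> complex"
  assumes [measurable]: "f \<in> borel_measurable N" shows "(\<lambda>x. cnj (f x)) \<in> borel_measurable N"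
  unfolding borel_measurable_complex_iff by simp

locale cl = prob_space M for M :: "'a measure" +
  fixes F :: "'a measure"
  assumes subalgF: "subalgebra M F"

sublocale cl \<subseteq> finite_measure_subalgebra M F
  by unfold_locales (rule subalgF)

context cl begin

definition CI :: "('a \<Rightarrow> real) \<Rightarrow> bool" where
  "CI X \<longleftrightarrow> X \<in> borel_measurable M \<and> (AE x in M. nn_cond_exp M F (\<lambda>y. ennreal \<bar>X y\<bar>) x < \<infinity>)"

lemma Fmeas_M: "f \<in> borel_measurable F \<Longrightarrow> f \<in> borel_measurable M"
  by (rule measurable_from_subalg[OF subalgF])

lemma setsF_M: "A \<in> sets F \<Longrightarrow> A \<in> sets M"
  using subalgF by (auto simp: subalgebra_def)

lemma spaceF: "space F = space M"
  using subalgF by (auto simp: subalgebra_def)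

lemma localize:
  assumes "\<And>N::nat. AE x in M. x \<in> A N \<longrightarrow> P x" and "AE x in M. \<exists>N. x \<in> A N"
  shows "AE x in M. P x"
proof -
  have "\<forall>N. AE x in M. x \<in> A N \<longrightarrow> P x" using assms(1) by blast
  then have "AE x in M. \<forall>N. x \<in> A N \<longrightarrow> P x" by (subst AE_all_countable)
  with assms(2) show ?thesis by eventually_elim blast
qed

lemma CI_int:
  assumes ci: "CI X" and c[measurable]: "c \<in> borel_measurable F"
    and A[measurable]: "A \<in> sets F" and N: "0 \<le> N"
    and bd: "\<And>x. x \<in> A \<Longrightarrow> nn_cond_exp M F (\<lambda>y. ennreal \<bar>X y\<bar>) x \<le> ennreal N \<and> \<bar>c x\<bar> \<le> N"
  shows "integrable M (\<lambda>x. indicator A x * c x * X x)"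
proof -
  have [measurable]: "X \<in> borel_measurable M" using ci by (simp add: CI_def)
  have [measurable]: "c \<in> borel_measurable M" by (rule Fmeas_M) simp
  have [measurable]: "A \<in> sets M" by (rule setsF_M) simp
  have "(\<integral>\<^sup>+x. ennreal (norm (indicator A x * c x * X x)) \<partial>M) \<le> (\<integral>\<^sup>+x. ennreal (indicator A x * N) * ennreal \<bar>X x\<bar> \<partial>M)"
  proof (rule nn_integral_mono)
    fix x assume "x \<in> space M"
    show "ennreal (norm (indicator A x * c x * X x)) \<le> ennreal (indicator A x * N) * ennreal \<bar>X x\<bar>"
    proof (cases "x \<in> A")
      case True
      then have "\<bar>c x\<bar> \<le> N" using bd by blast
      then have "\<bar>c x\<bar> * \<bar>X x\<bar> \<le> N * \<bar>X x\<bar>" by (simp add: mult_right_mono)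
      then have "ennreal (\<bar>c x\<bar> * \<bar>X x\<bar>) \<le> ennreal (N * \<bar>X x\<bar>)"
        by (rule ennreal_leI)
      also have "\<dots> = ennreal N * ennreal \<bar>X x\<bar>" using N by (simp add: ennreal_mult)
      finally show ?thesis using True by (simp add: abs_mult)
    qed simp
  qed
  also have "\<dots> = (\<integral>\<^sup>+x. ennreal (indicator A x * N) * nn_cond_exp M F (\<lambda>y. ennreal \<bar>X y\<bar>) x \<partial>M)"
    by (rule nn_cond_exp_intg[symmetric]) auto
  also have "\<dots> \<le> (\<integral>\<^sup>+x. ennreal (N * N) \<partial>M)"
  proof (rule nn_integral_mono)
    fix x assume "x \<in> space M"
    show "ennreal (indicator A x * N) * nn_cond_exp M F (\<lambda>y. ennreal \<bar>X y\<bar>) x \<le> ennreal (N * N)"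
    proof (cases "x \<in> A")
      case True
      then have "nn_cond_exp M F (\<lambda>y. ennreal \<bar>X y\<bar>) x \<le> ennreal N" using bd by blast
      then have "ennreal N * nn_cond_exp M F (\<lambda>y. ennreal \<bar>X y\<bar>) x \<le> ennreal N * ennreal N"
        by (rule mult_left_mono) simp
      also have "\<dots> = ennreal (N * N)" using N by (simp add: ennreal_mult)
      finally show ?thesis using True by simp
    qed simp
  qed
  also have "\<dots> = ennreal (N * N)" using emeasure_space_1 by simp
  also have "\<dots> < \<infinity>" by simp
  finally have fin: "(\<integral>\<^sup>+x. ennreal (norm (indicator A x * c x * X x)) \<partial>M) < \<infinity>" .
  show ?thesis
    by (rule integrableI_bounded) (simp, use fin in simp)
qed

lemma CI_meas[measurable_dest]: "CI X \<Longrightarrow> X \<in> borel_measurable M"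
  by (simp add: CI_def)

lemma CI_ex_N:
  assumes "CI X" and c: "c \<in> borel_measurable F"
  shows "AE x in M. \<exists>N::nat. nn_cond_exp M F (\<lambda>y. ennreal \<bar>X y\<bar>) x \<le> ennreal (real N) \<and> \<bar>c x\<bar> \<le> real N"
proof -
  have "AE x in M. nn_cond_exp M F (\<lambda>y. ennreal \<bar>X y\<bar>) x < \<infinity>" using assms by (simp add: CI_def)
  then show ?thesis
  proof eventually_elim
    case (elim x)
    obtain r where r: "nn_cond_exp M F (\<lambda>y. ennreal \<bar>X y\<bar>) x = ennreal r" "0 \<le> r"
      using elim by (cases "nn_cond_exp M F (\<lambda>y. ennreal \<bar>X y\<bar>) x") auto
    obtain N :: nat where N: "max r \<bar>c x\<bar> \<le> real N" using real_arch_simple by blast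
    show ?case
      by (rule exI[of _ N]) (use N r in \<open>auto intro: ennreal_leI\<close>)
  qed
qed

lemma rce_mult_CI:
  assumes ci: "CI X" and c[measurable]: "c \<in> borel_measurable F"
  shows "AE x in M. real_cond_exp M F (\<lambda>y. c y * X y) x = c x * real_cond_exp M F X x"
proof -
  have [measurable]: "X \<in> borel_measurable M" using ci by (simp add: CI_def)
  have [measurable]: "c \<in> borel_measurable M" by (rule Fmeas_M) simp
  define A where "A N = {x \<in> space M. nn_cond_exp M F (\<lambda>y. ennreal \<bar>X y\<bar>) x \<le> ennreal (real N) \<and> \<bar>c x\<bar> \<le> real N}" for N :: nat
  have AF[measurable]: "A N \<in> sets F" for N
  proof -
    have "A N = {x \<in> space F. nn_cond_exp M F (\<lambda>y. ennreal \<bar>X y\<bar>) x \<le> ennreal (real N) \<and> \<bar>c x\<bar> \<le> real N}"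
      unfolding A_def spaceF ..
    also have "\<dots> \<in> sets F" by measurable
    finally show ?thesis .
  qed
  show ?thesis
  proof (rule localize[of A])
    fix N :: nat
    have int: "integrable M (\<lambda>x. indicator (A N) x * c x * X x)"
      by (rule CI_int[OF ci c AF, of "real N"]) (auto simp: A_def)
    have 1: "AE x in M. real_cond_exp M F (\<lambda>x. (indicator (A N) x * c x) * X x) x = (indicator (A N) x * c x) * real_cond_exp M F X x"
      by (rule real_cond_exp_mult) (auto simp: int)
    have 2: "AE x in M. real_cond_exp M F (\<lambda>x. indicator (A N) x * (c x * X x)) x = indicator (A N) x * real_cond_exp M F (\<lambda>x. c x * X x) x"
      by (rule real_cond_exp_mult) (auto simp: int mult.assoc[symmetric])
    from 1 2 show "AE x in M. x \<in> A N \<longrightarrow> real_cond_exp M F (\<lambda>y. c y * X y) x = c x * real_cond_exp M F X x"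
      by eventually_elim (auto simp: mult.assoc indicator_def split: if_splits)
  next
    show "AE x in M. \<exists>N. x \<in> A N"
      using CI_ex_N[OF ci c] AE_space by eventually_elim (auto simp: A_def)
  qed
qed

lemma rce_add_CI:
  assumes ciX: "CI X" and ciY: "CI Y"
  shows "AE x in M. real_cond_exp M F (\<lambda>y. X y + Y y) x = real_cond_exp M F X x + real_cond_exp M F Y x"
proof -
  have [measurable]: "X \<in> borel_measurable M" "Y \<in> borel_measurable M" using ciX ciY by (simp_all add: CI_def)
  define A where "A N = {x \<in> space M. nn_cond_exp M F (\<lambda>y. ennreal \<bar>X y\<bar>) x \<le> ennreal (real N) \<and> nn_cond_exp M F (\<lambda>y. ennreal \<bar>Y y\<bar>) x \<le> ennreal (real N)}" for N :: nat
  have AF[measurable]: "A N \<in> sets F" for N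
  proof -
    have "A N = {x \<in> space F. nn_cond_exp M F (\<lambda>y. ennreal \<bar>X y\<bar>) x \<le> ennreal (real N) \<and> nn_cond_exp M F (\<lambda>y. ennreal \<bar>Y y\<bar>) x \<le> ennreal (real N)}"
      unfolding A_def spaceF ..
    also have "\<dots> \<in> sets F" by measurable
    finally show ?thesis .
  qed
  show ?thesis
  proof (rule localize[of A])
    fix N :: nat
    have "integrable M (\<lambda>x. indicator (A N) x * (\<lambda>_. 1) x * X x)"
    proof (rule CI_int[OF ciX _ AF, of _ "real N + 1"])
      fix x assume "x \<in> A N"
      then have "nn_cond_exp M F (\<lambda>y. ennreal \<bar>X y\<bar>) x \<le> ennreal (real N)" by (auto simp: A_def)
      also have "\<dots> \<le> ennreal (real N + 1)" by (rule ennreal_leI) simp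
      finally show "nn_cond_exp M F (\<lambda>y. ennreal \<bar>X y\<bar>) x \<le> ennreal (real N + 1) \<and> \<bar>(\<lambda>_. 1::real) x\<bar> \<le> real N + 1" by simp
    qed auto
    then have intX: "integrable M (\<lambda>x. indicator (A N) x * X x)" by simp
    have "integrable M (\<lambda>x. indicator (A N) x * (\<lambda>_. 1) x * Y x)"
    proof (rule CI_int[OF ciY _ AF, of _ "real N + 1"])
      fix x assume "x \<in> A N"
      then have "nn_cond_exp M F (\<lambda>y. ennreal \<bar>Y y\<bar>) x \<le> ennreal (real N)" by (auto simp: A_def)
      also have "\<dots> \<le> ennreal (real N + 1)" by (rule ennreal_leI) simp
      finally show "nn_cond_exp M F (\<lambda>y. ennreal \<bar>Y y\<bar>) x \<le> ennreal (real N + 1) \<and> \<bar>(\<lambda>_. 1::real) x\<bar> \<le> real N + 1" by simp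
    qed auto
    then have intY: "integrable M (\<lambda>x. indicator (A N) x * Y x)" by simp
    have intXY: "integrable M (\<lambda>x. indicator (A N) x * (X x + Y x))"
      using Bochner_Integration.integrable_add[OF intX intY] by (simp add: distrib_left)
    have 1: "AE x in M. real_cond_exp M F (\<lambda>x. indicator (A N) x * X x) x = indicator (A N) x * real_cond_exp M F X x"
      by (rule real_cond_exp_mult) (auto simp: intX)
    have 2: "AE x in M. real_cond_exp M F (\<lambda>x. indicator (A N) x * Y x) x = indicator (A N) x * real_cond_exp M F Y x"
      by (rule real_cond_exp_mult) (auto simp: intY)
    have 3: "AE x in M. real_cond_exp M F (\<lambda>x. indicator (A N) x * (X x + Y x)) x = indicator (A N) x * real_cond_exp M F (\<lambda>x. X x + Y x) x"
      by (rule real_cond_exp_mult) (auto simp: intXY)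
    have 4: "AE x in M. real_cond_exp M F (\<lambda>x. indicator (A N) x * X x + indicator (A N) x * Y x) x = real_cond_exp M F (\<lambda>x. indicator (A N) x * X x) x + real_cond_exp M F (\<lambda>x. indicator (A N) x * Y x) x"
      by (rule real_cond_exp_add[OF intX intY])
    from 1 2 3 4 show "AE x in M. x \<in> A N \<longrightarrow> real_cond_exp M F (\<lambda>y. X y + Y y) x = real_cond_exp M F X x + real_cond_exp M F Y x"
      by eventually_elim (auto simp: distrib_left indicator_def split: if_splits)
  next
    have "AE x in M. \<exists>N::nat. nn_cond_exp M F (\<lambda>y. ennreal \<bar>X y\<bar>) x \<le> ennreal (real N) \<and> \<bar>(0::real)\<bar> \<le> real N"
      using CI_ex_N[OF ciX, of "\<lambda>_. 0"] by simp
    moreover have "AE x in M. \<exists>N::nat. nn_cond_exp M F (\<lambda>y. ennreal \<bar>Y y\<bar>) x \<le> ennreal (real N) \<and> \<bar>(0::real)\<bar> \<le> real N"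
      using CI_ex_N[OF ciY, of "\<lambda>_. 0"] by simp
    moreover note AE_space
    ultimately show "AE x in M. \<exists>N. x \<in> A N"
    proof eventually_elim
      case (elim x)
      then obtain N1 N2 :: nat where "nn_cond_exp M F (\<lambda>y. ennreal \<bar>X y\<bar>) x \<le> ennreal (real N1)"
        "nn_cond_exp M F (\<lambda>y. ennreal \<bar>Y y\<bar>) x \<le> ennreal (real N2)" by blast
      then have "nn_cond_exp M F (\<lambda>y. ennreal \<bar>X y\<bar>) x \<le> ennreal (real (max N1 N2))"
        "nn_cond_exp M F (\<lambda>y. ennreal \<bar>Y y\<bar>) x \<le> ennreal (real (max N1 N2))"
        by (auto elim!: order_trans intro!: ennreal_leI)
      then show ?case using elim(3) by (auto simp: A_def)
    qed
  qed
qed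

lemma nn_ce_zero: "AE x in M. nn_cond_exp M F (\<lambda>_. 0) x = 0"
  using nn_cond_exp_F_meas[of "\<lambda>_. 0"] by auto

lemma rce_nonneg:
  assumes [measurable]: "X \<in> borel_measurable M" and nn: "\<And>y. 0 \<le> X y"
  shows "AE x in M. real_cond_exp M F X x = enn2real (nn_cond_exp M F (\<lambda>y. ennreal (X y)) x)"
proof -
  have "(\<lambda>y. ennreal (- X y)) = (\<lambda>_. 0)" using nn by (auto simp: ennreal_neg)
  with nn_ce_zero show ?thesis unfolding real_cond_exp_def by auto
qed

lemma rce_zero: "AE x in M. real_cond_exp M F (\<lambda>_. 0) x = 0"
  using rce_nonneg[of "\<lambda>_. 0"] nn_ce_zero by auto

lemma CI_mono:
  assumes [measurable]: "Y \<in> borel_measurable M" "Z \<in> borel_measurable M"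
    and le: "\<And>y. \<bar>Y y\<bar> \<le> Z y" and fin: "AE x in M. nn_cond_exp M F (\<lambda>y. ennreal (Z y)) x < \<infinity>"
  shows "CI Y"
proof -
  have "AE x in M. nn_cond_exp M F (\<lambda>y. ennreal \<bar>Y y\<bar>) x \<le> nn_cond_exp M F (\<lambda>y. ennreal (Z y)) x"
    by (rule nn_cond_exp_mono) (auto intro: ennreal_leI le)
  then have "AE x in M. nn_cond_exp M F (\<lambda>y. ennreal \<bar>Y y\<bar>) x < \<infinity>"
    using fin by eventually_elim (rule le_less_trans)
  then show ?thesis unfolding CI_def by simp
qed

lemma CI_add:
  assumes "CI X" "CI Y" shows "CI (\<lambda>y. X y + Y y)"
proof -
  have [measurable]: "X \<in> borel_measurable M" "Y \<in> borel_measurable M" using assms by (auto simp: CI_def)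
  have "AE x in M. nn_cond_exp M F (\<lambda>y. ennreal \<bar>X y\<bar>) x + nn_cond_exp M F (\<lambda>y. ennreal \<bar>Y y\<bar>) x = nn_cond_exp M F (\<lambda>y. ennreal \<bar>X y\<bar> + ennreal \<bar>Y y\<bar>) x"
    by (rule nn_cond_exp_sum) auto
  note s1 = this
  have fe: "(\<lambda>y. ennreal \<bar>X y\<bar> + ennreal \<bar>Y y\<bar>) = (\<lambda>y. ennreal (\<bar>X y\<bar> + \<bar>Y y\<bar>))"
    by (auto simp: ennreal_plus)
  have eq: "AE x in M. nn_cond_exp M F (\<lambda>y. ennreal \<bar>X y\<bar>) x + nn_cond_exp M F (\<lambda>y. ennreal \<bar>Y y\<bar>) x = nn_cond_exp M F (\<lambda>y. ennreal (\<bar>X y\<bar> + \<bar>Y y\<bar>)) x"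
    using s1 unfolding fe .
  have "AE x in M. nn_cond_exp M F (\<lambda>y. ennreal \<bar>X y\<bar>) x < \<infinity>" "AE x in M. nn_cond_exp M F (\<lambda>y. ennreal \<bar>Y y\<bar>) x < \<infinity>"
    using assms unfolding CI_def by simp_all
  with eq have fin: "AE x in M. nn_cond_exp M F (\<lambda>y. ennreal (\<bar>X y\<bar> + \<bar>Y y\<bar>)) x < \<infinity>"
    by eventually_elim (erule subst, simp)
  show ?thesis proof (rule CI_mono[of "\<lambda>y. X y + Y y" "\<lambda>y. \<bar>X y\<bar> + \<bar>Y y\<bar>", OF _ _ _ fin])
    show "(\<lambda>y. X y + Y y) \<in> borel_measurable M" by measurable
    show "(\<lambda>y. \<bar>X y\<bar> + \<bar>Y y\<bar>) \<in> borel_measurable M" by measurable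
  qed (rule abs_triangle_ineq)
qed

lemma CI_mult:
  assumes "CI X" and c[measurable]: "c \<in> borel_measurable F" shows "CI (\<lambda>y. c y * X y)"
proof -
  have [measurable]: "X \<in> borel_measurable M" using assms by (auto simp: CI_def)
  have [measurable]: "c \<in> borel_measurable M" by (rule Fmeas_M) simp
  have "AE x in M. ennreal \<bar>c x\<bar> * nn_cond_exp M F (\<lambda>y. ennreal \<bar>X y\<bar>) x = nn_cond_exp M F (\<lambda>y. ennreal \<bar>c y\<bar> * ennreal \<bar>X y\<bar>) x"
    by (rule nn_cond_exp_prod) auto
  note s1 = this
  have fe: "(\<lambda>y. ennreal \<bar>c y\<bar> * ennreal \<bar>X y\<bar>) = (\<lambda>y. ennreal \<bar>c y * X y\<bar>)"
    by (auto simp: ennreal_mult abs_mult)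
  have eq: "AE x in M. ennreal \<bar>c x\<bar> * nn_cond_exp M F (\<lambda>y. ennreal \<bar>X y\<bar>) x = nn_cond_exp M F (\<lambda>y. ennreal \<bar>c y * X y\<bar>) x"
    using s1 unfolding fe .
  have "AE x in M. nn_cond_exp M F (\<lambda>y. ennreal \<bar>X y\<bar>) x < \<infinity>"
    using assms unfolding CI_def by simp
  with eq have fin: "AE x in M. nn_cond_exp M F (\<lambda>y. ennreal \<bar>c y * X y\<bar>) x < \<infinity>"
    by eventually_elim (erule subst, simp add: ennreal_mult_less_top)
  have "(\<lambda>y. c y * X y) \<in> borel_measurable M" by measurable
  with fin show ?thesis unfolding CI_def by blast
qed

lemma rce_lin2:
  assumes "CI X" "CI Y" "c \<in> borel_measurable F" "d \<in> borel_measurable F"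
  shows "AE x in M. real_cond_exp M F (\<lambda>y. c y * X y + d y * Y y) x = c x * real_cond_exp M F X x + d x * real_cond_exp M F Y x"
  using rce_add_CI[OF CI_mult[OF assms(1,3)] CI_mult[OF assms(2,4)]] rce_mult_CI[OF assms(1,3)] rce_mult_CI[OF assms(2,4)]
  by eventually_elim simp

lemma CI_mono':
  assumes "CI Z" "Y \<in> borel_measurable M" "\<And>y. \<bar>Y y\<bar> \<le> \<bar>Z y\<bar>" shows "CI Y"
proof -
  have [measurable]: "Z \<in> borel_measurable M" using assms by (simp add: CI_def)
  show ?thesis
  proof (rule CI_mono[of Y "\<lambda>y. \<bar>Z y\<bar>"])
    show "(\<lambda>y. \<bar>Z y\<bar>) \<in> borel_measurable M" by measurable
  qed (use assms in \<open>auto simp: CI_def\<close>)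
qed

definition qn :: "('a \<Rightarrow> complex) \<Rightarrow> 'a \<Rightarrow> ennreal" where
  "qn h = nn_cond_exp M F (\<lambda>y. ennreal ((cmod (h y))\<^sup>2))"

definition Qn :: "('a \<Rightarrow> complex) \<Rightarrow> 'a \<Rightarrow> real" where
  "Qn h x = enn2real (qn h x)"

definition cip :: "('a \<Rightarrow> complex) \<Rightarrow> ('a \<Rightarrow> complex) \<Rightarrow> 'a \<Rightarrow> complex" where
  "cip h g x = complex_of_real (real_cond_exp M F (\<lambda>y. Re (h y * cnj (g y))) x)
     + \<i> * complex_of_real (real_cond_exp M F (\<lambda>y. Im (h y * cnj (g y))) x)"

lemma qn_meas[measurable]: "qn h \<in> borel_measurable F"
  unfolding qn_def by simp

lemma Qn_meas[measurable]: "Qn h \<in> borel_measurable F"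
  unfolding Qn_def[abs_def] by measurable

lemma cip_meas[measurable]: "cip h g \<in> borel_measurable F"
  unfolding cip_def[abs_def] by measurable

lemma Qn_nonneg: "0 \<le> Qn h x"
  by (simp add: Qn_def)

lemma L2_iff: "h \<in> L2_cond M F \<longleftrightarrow> h \<in> borel_measurable M \<and> CI (\<lambda>y. (cmod (h y))\<^sup>2)"
  unfolding L2_cond_def CI_def by auto

lemma L2_meas[measurable_dest]: "h \<in> L2_cond M F \<Longrightarrow> h \<in> borel_measurable M"
  by (simp add: L2_cond_def)

lemma L2_CI: "h \<in> L2_cond M F \<Longrightarrow> CI (\<lambda>y. (cmod (h y))\<^sup>2)"
  by (simp add: L2_iff)

lemma L2_q: "h \<in> L2_cond M F \<Longrightarrow> AE x in M. qn h x = ennreal (Qn h x)"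
  unfolding L2_cond_def qn_def Qn_def by (auto elim!: eventually_mono simp: less_top[symmetric] ennreal_enn2real_if)

lemma rce_sq:
  assumes [measurable]: "h \<in> borel_measurable M"
  shows "AE x in M. real_cond_exp M F (\<lambda>y. (cmod (h y))\<^sup>2) x = Qn h x"
  using rce_nonneg[of "\<lambda>y. (cmod (h y))\<^sup>2"] unfolding Qn_def qn_def by simp

lemma prod_bound: "\<bar>Re (z * cnj w)\<bar> \<le> \<bar>(cmod z)\<^sup>2 + (cmod w)\<^sup>2\<bar>" "\<bar>Im (z * cnj w)\<bar> \<le> \<bar>(cmod z)\<^sup>2 + (cmod w)\<^sup>2\<bar>"
proof -
  have "cmod z * cmod w \<le> (cmod z)\<^sup>2 + (cmod w)\<^sup>2"
    by (smt (verit) norm_ge_zero power2_eq_square mult_nonneg_nonneg mult_left_mono mult_right_mono)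
  moreover have "\<bar>Re (z * cnj w)\<bar> \<le> cmod z * cmod w" "\<bar>Im (z * cnj w)\<bar> \<le> cmod z * cmod w"
    using abs_Re_le_cmod[of "z * cnj w"] abs_Im_le_cmod[of "z * cnj w"] by (simp_all add: norm_mult)
  ultimately show "\<bar>Re (z * cnj w)\<bar> \<le> \<bar>(cmod z)\<^sup>2 + (cmod w)\<^sup>2\<bar>" "\<bar>Im (z * cnj w)\<bar> \<le> \<bar>(cmod z)\<^sup>2 + (cmod w)\<^sup>2\<bar>"
    by auto
qed

lemma CI_Re: assumes "h \<in> L2_cond M F" "g \<in> L2_cond M F" shows "CI (\<lambda>y. Re (h y * cnj (g y)))"
proof (rule CI_mono'[OF CI_add[OF L2_CI[OF assms(1)] L2_CI[OF assms(2)]]])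
  have [measurable]: "h \<in> borel_measurable M" "g \<in> borel_measurable M" using assms by (auto simp: L2_cond_def)
  show "(\<lambda>y. Re (h y * cnj (g y))) \<in> borel_measurable M" by measurable
qed (rule prod_bound)

lemma CI_Im: assumes "h \<in> L2_cond M F" "g \<in> L2_cond M F" shows "CI (\<lambda>y. Im (h y * cnj (g y)))"
proof (rule CI_mono'[OF CI_add[OF L2_CI[OF assms(1)] L2_CI[OF assms(2)]]])
  have [measurable]: "h \<in> borel_measurable M" "g \<in> borel_measurable M" using assms by (auto simp: L2_cond_def)
  show "(\<lambda>y. Im (h y * cnj (g y))) \<in> borel_measurable M" by measurable
qed (rule prod_bound)

lemma sq_bound: "(cmod (a + b))\<^sup>2 \<le> 2 * (cmod a)\<^sup>2 + 2 * (cmod b)\<^sup>2"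
proof -
  have "cmod (a + b) \<le> cmod a + cmod b" by (rule norm_triangle_ineq)
  then have "(cmod (a + b))\<^sup>2 \<le> (cmod a + cmod b)\<^sup>2" by (simp add: power_mono)
  also have "\<dots> \<le> 2 * (cmod a)\<^sup>2 + 2 * (cmod b)\<^sup>2"
    by (smt (verit) power2_sum sum_squares_bound)
  finally show ?thesis .
qed

lemma L2_add:
  assumes h: "h \<in> L2_cond M F" and g: "g \<in> L2_cond M F" shows "(\<lambda>y. h y + g y) \<in> L2_cond M F"
proof -
  have [measurable]: "h \<in> borel_measurable M" "g \<in> borel_measurable M" using assms by (auto simp: L2_cond_def)
  have "CI (\<lambda>y. (\<lambda>_. 2) y * (cmod (h y))\<^sup>2 + (\<lambda>_. 2) y * (cmod (g y))\<^sup>2)"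
    by (rule CI_add[OF CI_mult[OF L2_CI[OF h]] CI_mult[OF L2_CI[OF g]]]) simp_all
  then have "CI (\<lambda>y. (cmod (h y + g y))\<^sup>2)"
  proof (rule CI_mono')
    show "(\<lambda>y. (cmod (h y + g y))\<^sup>2) \<in> borel_measurable M" by measurable
  qed (use sq_bound in auto)
  then show ?thesis unfolding L2_iff by simp
qed

lemma L2_cmult:
  assumes h: "h \<in> L2_cond M F" and c[measurable]: "c \<in> borel_measurable F" shows "(\<lambda>y. c y * h y) \<in> L2_cond M F"
proof -
  have [measurable]: "h \<in> borel_measurable M" using assms by (auto simp: L2_cond_def)
  have [measurable]: "c \<in> borel_measurable M" by (rule Fmeas_M) simp
  have "CI (\<lambda>y. (\<lambda>y. (cmod (c y))\<^sup>2) y * (cmod (h y))\<^sup>2)"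
    by (rule CI_mult[OF L2_CI[OF h]]) measurable
  then have "CI (\<lambda>y. (cmod (c y * h y))\<^sup>2)"
  proof (rule CI_mono')
    show "(\<lambda>y. (cmod (c y * h y))\<^sup>2) \<in> borel_measurable M" by measurable
  qed (simp add: norm_mult power_mult_distrib)
  then show ?thesis unfolding L2_iff by simp
qed

lemma L2_cong:
  assumes h: "h \<in> L2_cond M F" and [measurable]: "h' \<in> borel_measurable M" and ae: "AE x in M. h x = h' x"
  shows "h' \<in> L2_cond M F"
proof -
  have [measurable]: "h \<in> borel_measurable M" using assms by (auto simp: L2_cond_def)
  have "AE x in M. nn_cond_exp M F (\<lambda>y. ennreal ((cmod (h y))\<^sup>2)) x = nn_cond_exp M F (\<lambda>y. ennreal ((cmod (h' y))\<^sup>2)) x"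
    by (rule nn_cond_exp_cong) (use ae in auto)
  with h show ?thesis unfolding L2_cond_def by auto
qed

lemma L2_diff:
  assumes h: "h \<in> L2_cond M F" and g: "g \<in> L2_cond M F" shows "(\<lambda>y. h y - g y) \<in> L2_cond M F"
  using L2_add[OF h L2_cmult[OF g, of "\<lambda>_. -1"]] by simp

lemma L2_zero: "(\<lambda>_. 0) \<in> L2_cond M F"
  unfolding L2_cond_def using nn_ce_zero by auto

lemma L2_sum:
  fixes n :: nat
  assumes "\<And>i. i < n \<Longrightarrow> g i \<in> L2_cond M F" "\<And>i. i < n \<Longrightarrow> a i \<in> borel_measurable F"
  shows "(\<lambda>y. \<Sum>i<n. a i y * g i y) \<in> L2_cond M F"
  using assms
proof (induction n)
  case 0
  show ?case using L2_zero by simp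
next
  case (Suc n)
  have "(\<lambda>y. (\<Sum>i<n. a i y * g i y) + a n y * g n y) \<in> L2_cond M F"
    by (rule L2_add[OF Suc.IH L2_cmult]) (use Suc.prems in auto)
  then show ?case by simp
qed

lemma rce_lin4:
  assumes "CI X1" "CI X2" "CI X3" "CI X4"
    "c1 \<in> borel_measurable F" "c2 \<in> borel_measurable F" "c3 \<in> borel_measurable F" "c4 \<in> borel_measurable F"
  shows "AE x in M. real_cond_exp M F (\<lambda>y. (c1 y * X1 y + c2 y * X2 y) + (c3 y * X3 y + c4 y * X4 y)) x
     = (c1 x * real_cond_exp M F X1 x + c2 x * real_cond_exp M F X2 x) + (c3 x * real_cond_exp M F X3 x + c4 x * real_cond_exp M F X4 x)"
  using rce_add_CI[OF CI_add[OF CI_mult[OF assms(1,5)] CI_mult[OF assms(2,6)]] CI_add[OF CI_mult[OF assms(3,7)] CI_mult[OF assms(4,8)]]]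
    rce_lin2[OF assms(1,2,5,6)] rce_lin2[OF assms(3,4,7,8)]
  by eventually_elim simp

lemma cip_lin2:
  assumes h: "h \<in> L2_cond M F" and k: "k \<in> L2_cond M F" and g: "g \<in> L2_cond M F"
    and a[measurable]: "a \<in> borel_measurable F" and b[measurable]: "b \<in> borel_measurable F"
  shows "AE x in M. cip (\<lambda>y. a y * h y + b y * k y) g x = a x * cip h g x + b x * cip k g x"
proof -
  have fr: "(\<lambda>y. Re ((a y * h y + b y * k y) * cnj (g y))) =
     (\<lambda>y. ((\<lambda>y. Re (a y)) y * Re (h y * cnj (g y)) + (\<lambda>y. - Im (a y)) y * Im (h y * cnj (g y)))
        + ((\<lambda>y. Re (b y)) y * Re (k y * cnj (g y)) + (\<lambda>y. - Im (b y)) y * Im (k y * cnj (g y))))"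
    by (auto simp: algebra_simps)
  have fi: "(\<lambda>y. Im ((a y * h y + b y * k y) * cnj (g y))) =
     (\<lambda>y. ((\<lambda>y. Im (a y)) y * Re (h y * cnj (g y)) + (\<lambda>y. Re (a y)) y * Im (h y * cnj (g y)))
        + ((\<lambda>y. Im (b y)) y * Re (k y * cnj (g y)) + (\<lambda>y. Re (b y)) y * Im (k y * cnj (g y))))"
    by (auto simp: algebra_simps)
  have R: "AE x in M. real_cond_exp M F (\<lambda>y. Re ((a y * h y + b y * k y) * cnj (g y))) x =
      (Re (a x) * real_cond_exp M F (\<lambda>y. Re (h y * cnj (g y))) x + - Im (a x) * real_cond_exp M F (\<lambda>y. Im (h y * cnj (g y))) x)
      + (Re (b x) * real_cond_exp M F (\<lambda>y. Re (k y * cnj (g y))) x + - Im (b x) * real_cond_exp M F (\<lambda>y. Im (k y * cnj (g y))) x)"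
    unfolding fr by (rule rce_lin4[OF CI_Re[OF h g] CI_Im[OF h g] CI_Re[OF k g] CI_Im[OF k g]]) measurable
  have I: "AE x in M. real_cond_exp M F (\<lambda>y. Im ((a y * h y + b y * k y) * cnj (g y))) x =
      (Im (a x) * real_cond_exp M F (\<lambda>y. Re (h y * cnj (g y))) x + Re (a x) * real_cond_exp M F (\<lambda>y. Im (h y * cnj (g y))) x)
      + (Im (b x) * real_cond_exp M F (\<lambda>y. Re (k y * cnj (g y))) x + Re (b x) * real_cond_exp M F (\<lambda>y. Im (k y * cnj (g y))) x)"
    unfolding fi by (rule rce_lin4[OF CI_Re[OF h g] CI_Im[OF h g] CI_Re[OF k g] CI_Im[OF k g]]) measurable
  from R I show ?thesis
    by eventually_elim (simp add: cip_def complex_eq_iff algebra_simps)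
qed

lemma cip_self:
  assumes g: "g \<in> L2_cond M F" shows "AE x in M. cip g g x = Qn g x"
proof -
  have [measurable]: "g \<in> borel_measurable M" using g by (simp add: L2_cond_def)
  have fr: "(\<lambda>y. Re (g y * cnj (g y))) = (\<lambda>y. (cmod (g y))\<^sup>2)"
    by (rule ext, subst cmod_power2) (simp add: power2_eq_square)
  have fi: "(\<lambda>y. Im (g y * cnj (g y))) = (\<lambda>y. 0)"
    by auto
  show ?thesis using rce_sq[OF \<open>g \<in> borel_measurable M\<close>] rce_zero unfolding cip_def fr fi
    by eventually_elim simp
qed

lemma sq_expand: "(cmod (e + b * g))\<^sup>2 = (1 * (cmod e)\<^sup>2 + (cmod b)\<^sup>2 * (cmod g)\<^sup>2) + ((2 * Re b) * Re (e * cnj g) + (2 * Im b) * Im (e * cnj g))"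
  by (simp only: cmod_power2) (simp add: power2_eq_square algebra_simps)

lemma pythag:
  assumes E: "E \<in> L2_cond M F" and g: "g \<in> L2_cond M F" and b[measurable]: "b \<in> borel_measurable F"
  shows "AE x in M. Qn (\<lambda>y. E y + b y * g y) x = Qn E x + (cmod (b x))\<^sup>2 * Qn g x + 2 * (Re (b x) * Re (cip E g x) + Im (b x) * Im (cip E g x))"
proof -
  have gm[measurable]: "g \<in> borel_measurable M" and Em[measurable]: "E \<in> borel_measurable M" using E g by (simp_all add: L2_cond_def)
  have [measurable]: "b \<in> borel_measurable M" by (rule Fmeas_M) simp
  have fe: "(\<lambda>y. (cmod (E y + b y * g y))\<^sup>2) = (\<lambda>y. ((\<lambda>_. 1) y * (cmod (E y))\<^sup>2 + (\<lambda>y. (cmod (b y))\<^sup>2) y * (cmod (g y))\<^sup>2)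
     + ((\<lambda>y. 2 * Re (b y)) y * Re (E y * cnj (g y)) + (\<lambda>y. 2 * Im (b y)) y * Im (E y * cnj (g y))))"
    by (simp only: sq_expand)
  have 1: "AE x in M. real_cond_exp M F (\<lambda>y. (cmod (E y + b y * g y))\<^sup>2) x =
     (1 * real_cond_exp M F (\<lambda>y. (cmod (E y))\<^sup>2) x + (cmod (b x))\<^sup>2 * real_cond_exp M F (\<lambda>y. (cmod (g y))\<^sup>2) x)
     + (2 * Re (b x) * real_cond_exp M F (\<lambda>y. Re (E y * cnj (g y))) x + 2 * Im (b x) * real_cond_exp M F (\<lambda>y. Im (E y * cnj (g y))) x)"
    unfolding fe by (rule rce_lin4[OF L2_CI[OF E] L2_CI[OF g] CI_Re[OF E g] CI_Im[OF E g]]) measurable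
  have 2: "AE x in M. real_cond_exp M F (\<lambda>y. (cmod (E y + b y * g y))\<^sup>2) x = Qn (\<lambda>y. E y + b y * g y) x"
    by (rule rce_sq) measurable
  from 1 2 rce_sq[OF Em] rce_sq[OF gm] show ?thesis
    by eventually_elim (simp add: cip_def algebra_simps)
qed

lemma Qn_zero:
  assumes h: "h \<in> L2_cond M F" shows "AE x in M. Qn h x = 0 \<longrightarrow> h x = 0"
proof -
  have [measurable]: "h \<in> borel_measurable M" using h by (simp add: L2_cond_def)
  define A where "A = {x \<in> space M. Qn h x = 0}"
  have AF[measurable]: "A \<in> sets F"
  proof -
    have "A = {x \<in> space F. Qn h x = 0}" unfolding A_def spaceF ..
    also have "\<dots> \<in> sets F" by measurable
    finally show ?thesis .
  qed
  have [measurable]: "A \<in> sets M" by (rule setsF_M) simp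
  have "(\<integral>\<^sup>+ x. indicator A x * ennreal ((cmod (h x))\<^sup>2) \<partial>M) = (\<integral>\<^sup>+ x. indicator A x * qn h x \<partial>M)"
    unfolding qn_def by (rule nn_cond_exp_intg[symmetric]) auto
  also have "\<dots> = (\<integral>\<^sup>+ x. indicator A x * ennreal (Qn h x) \<partial>M)"
    by (rule nn_integral_cong_AE) (use L2_q[OF h] in \<open>auto elim: eventually_mono\<close>)
  also have "\<dots> = (\<integral>\<^sup>+ x. 0 \<partial>M)"
    by (rule nn_integral_cong) (auto simp: A_def indicator_def)
  finally have "(\<integral>\<^sup>+ x. indicator A x * ennreal ((cmod (h x))\<^sup>2) \<partial>M) = 0" by simp
  then have "AE x in M. indicator A x * ennreal ((cmod (h x))\<^sup>2) = 0"
    by (subst (asm) nn_integral_0_iff_AE) auto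
  then show ?thesis using AE_space
    by eventually_elim (auto simp: A_def indicator_def)
qed

lemma cip_zero:
  assumes h: "h \<in> L2_cond M F" and g: "g \<in> L2_cond M F" shows "AE x in M. Qn g x = 0 \<longrightarrow> cip h g x = 0"
proof -
  have [measurable]: "h \<in> borel_measurable M" "g \<in> borel_measurable M" using h g by (simp_all add: L2_cond_def)
  define A where "A = {x \<in> space M. Qn g x = 0}"
  have AF[measurable]: "A \<in> sets F"
  proof -
    have "A = {x \<in> space F. Qn g x = 0}" unfolding A_def spaceF ..
    also have "\<dots> \<in> sets F" by measurable
    finally show ?thesis .
  qed
  have [measurable]: "A \<in> sets M" by (rule setsF_M) simp
  have z: "AE x in M. indicator A x * X (h x * cnj (g x)) = (0::real)" if "X 0 = 0" for X :: "complex \<Rightarrow> real"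
    using Qn_zero[OF g] by eventually_elim (auto simp: A_def indicator_def that)
  have key: "AE x in M. x \<in> A \<longrightarrow> real_cond_exp M F (\<lambda>y. X (h y * cnj (g y))) x = 0"
    if ci: "CI (\<lambda>y. X (h y * cnj (g y)))" and X0: "X 0 = 0" and [measurable]: "X \<in> borel_measurable borel" for X :: "complex \<Rightarrow> real"
  proof -
    have 1: "AE x in M. real_cond_exp M F (\<lambda>y. indicator A y * X (h y * cnj (g y))) x = indicator A x * real_cond_exp M F (\<lambda>y. X (h y * cnj (g y))) x"
      by (rule rce_mult_CI[OF ci]) simp
    have 2: "AE x in M. real_cond_exp M F (\<lambda>y. indicator A y * X (h y * cnj (g y))) x = real_cond_exp M F (\<lambda>_. 0) x"
      by (rule real_cond_exp_cong) (use z[of X, OF X0] in auto)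
    from 1 2 rce_zero show ?thesis
      by eventually_elim (auto simp: indicator_def)
  qed
  have R: "AE x in M. x \<in> A \<longrightarrow> real_cond_exp M F (\<lambda>y. Re (h y * cnj (g y))) x = 0"
    by (rule key[OF CI_Re[OF h g]]) auto
  have I: "AE x in M. x \<in> A \<longrightarrow> real_cond_exp M F (\<lambda>y. Im (h y * cnj (g y))) x = 0"
    by (rule key[OF CI_Im[OF h g]]) auto
  from R I AE_space show ?thesis
    by eventually_elim (auto simp: A_def cip_def)
qed

definition dd :: "('a \<Rightarrow> complex) \<Rightarrow> real" where
  "dd X = enn2real (\<integral>\<^sup>+ x. min 1 (cond_norm M F X x) \<partial>(restr_to_subalg M F))"

lemma cond_norm_meas[measurable]: "cond_norm M F h \<in> borel_measurable F"
  unfolding cond_norm_def[abs_def] Let_def by measurable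

lemma cond_norm_L2:
  assumes h: "h \<in> L2_cond M F" shows "AE x in M. cond_norm M F h x = ennreal (sqrt (Qn h x))"
  using h unfolding L2_cond_def by (auto elim!: eventually_mono simp: cond_norm_def qn_def Qn_def Let_def)

lemma restr_int_fin: "(\<integral>\<^sup>+ x. min 1 (u x) \<partial>(restr_to_subalg M F)) < \<infinity>"
proof -
  interpret R: prob_space "restr_to_subalg M F"
    by (rule prob_space_restr_to_subalg[OF subalgF]) unfold_locales
  have "(\<integral>\<^sup>+ x. min 1 (u x) \<partial>(restr_to_subalg M F)) \<le> (\<integral>\<^sup>+ x. 1 \<partial>(restr_to_subalg M F))"
    by (rule nn_integral_mono) simp
  also have "\<dots> = 1" by (simp add: R.emeasure_space_1)
  finally show ?thesis by (simp add: le_less_trans)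
qed

lemma dd_mono:
  assumes D: "D \<in> L2_cond M F" and E: "E \<in> L2_cond M F" and le: "AE x in M. Qn E x \<le> Qn D x"
  shows "dd E \<le> dd D"
proof -
  have "AE x in M. min 1 (cond_norm M F E x) \<le> min 1 (cond_norm M F D x)"
    using cond_norm_L2[OF D] cond_norm_L2[OF E] le
    by eventually_elim (rule min.mono, simp, simp add: ennreal_leI real_sqrt_le_mono)
  then have "AE x in restr_to_subalg M F. min 1 (cond_norm M F E x) \<le> min 1 (cond_norm M F D x)"
    by (rule AE_restr_to_subalg2[OF subalgF]) measurable
  then have "(\<integral>\<^sup>+ x. min 1 (cond_norm M F E x) \<partial>(restr_to_subalg M F)) \<le> (\<integral>\<^sup>+ x. min 1 (cond_norm M F D x) \<partial>(restr_to_subalg M F))"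
    by (rule nn_integral_mono_AE)
  then show ?thesis unfolding dd_def
    by (rule enn2real_mono) (use restr_int_fin in simp)
qed

lemma dd_nonneg: "0 \<le> dd X"
  by (simp add: dd_def)

lemma Qn_cong:
  assumes [measurable]: "h \<in> borel_measurable M" "h' \<in> borel_measurable M" and ae: "AE x in M. h x = h' x"
  shows "AE x in M. Qn h x = Qn h' x"
proof -
  have "AE x in M. nn_cond_exp M F (\<lambda>y. ennreal ((cmod (h y))\<^sup>2)) x = nn_cond_exp M F (\<lambda>y. ennreal ((cmod (h' y))\<^sup>2)) x"
    by (rule nn_cond_exp_cong) (use ae in auto)
  then show ?thesis by eventually_elim (simp add: Qn_def qn_def)
qed

lemma dd_cong:
  assumes D: "D \<in> L2_cond M F" and E: "E \<in> L2_cond M F" and ae: "AE x in M. D x = E x"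
  shows "dd D = dd E"
proof -
  have "AE x in M. Qn D x = Qn E x"
    by (rule Qn_cong) (use D E ae in \<open>auto simp: L2_cond_def\<close>)
  then have "AE x in M. Qn D x \<le> Qn E x" "AE x in M. Qn E x \<le> Qn D x" by (auto elim: eventually_mono)
  with dd_mono[OF D E] dd_mono[OF E D] show ?thesis by fastforce
qed

lemma dd_zero:
  assumes h: "h \<in> L2_cond M F" and z: "dd h = 0" shows "AE x in M. h x = 0"
proof -
  have "(\<integral>\<^sup>+ x. min 1 (cond_norm M F h x) \<partial>(restr_to_subalg M F)) = 0"
    using z restr_int_fin[of "cond_norm M F h"] unfolding dd_def by (auto simp: enn2real_eq_0_iff)
  then have "AE x in restr_to_subalg M F. min 1 (cond_norm M F h x) = 0"
    by (subst (asm) nn_integral_0_iff_AE) (auto intro: measurable_in_subalg[OF subalgF])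
  then have "AE x in M. min 1 (cond_norm M F h x) = 0"
    by (rule AE_restr_to_subalg[OF subalgF])
  with cond_norm_L2[OF h] Qn_zero[OF h] show ?thesis
  proof eventually_elim
    case (elim x)
    then have "min 1 (ennreal (sqrt (Qn h x))) = 0" by simp
    then have "sqrt (Qn h x) \<le> 0" by (auto simp: min_def ennreal_eq_0_iff split: if_splits)
    then have "Qn h x = 0" using Qn_nonneg[of h x] by simp
    with elim show ?case by simp
  qed
qed

definition modL :: "('a \<Rightarrow> complex) list \<Rightarrow> ('a \<Rightarrow> complex) set" where
  "modL gs = {h. h \<in> borel_measurable M \<and> (\<exists>a. (\<forall>i<length gs. a i \<in> borel_measurable F) \<and>
      (AE x in M. h x = (\<Sum>i<length gs. a i x * (gs ! i) x)))}"

lemma modL_L2: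
  assumes "set gs \<subseteq> L2_cond M F" "h \<in> modL gs" shows "h \<in> L2_cond M F"
proof -
  obtain a where a: "\<forall>i<length gs. a i \<in> borel_measurable F" "AE x in M. h x = (\<Sum>i<length gs. a i x * (gs ! i) x)"
    and [measurable]: "h \<in> borel_measurable M"
    using assms(2) by (auto simp: modL_def)
  have L: "(\<lambda>y. \<Sum>i<length gs. a i y * (gs ! i) y) \<in> L2_cond M F"
    by (rule L2_sum) (use assms(1) a in auto)
  show ?thesis
    by (rule L2_cong[OF L]) (use a in \<open>auto elim: eventually_mono\<close>)
qed

lemma cip_sum:
  fixes n :: nat
  assumes "\<And>i. i < n \<Longrightarrow> h i \<in> L2_cond M F" "\<And>i. i < n \<Longrightarrow> b i \<in> borel_measurable F" and g: "g \<in> L2_cond M F"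
  shows "AE x in M. cip (\<lambda>y. \<Sum>i<n. b i y * h i y) g x = (\<Sum>i<n. b i x * cip (h i) g x)"
  using assms(1,2)
proof (induction n)
  case 0
  have "AE x in M. cip (\<lambda>y. (\<lambda>_. 0) y * g y + (\<lambda>_. 0) y * g y) g x = 0 * cip g g x + 0 * cip g g x"
    by (rule cip_lin2[OF g g g]) simp_all
  then show ?case by simp
next
  case (Suc n)
  have S: "(\<lambda>y. \<Sum>i<n. b i y * h i y) \<in> L2_cond M F"
    by (rule L2_sum) (use Suc.prems in auto)
  have "AE x in M. cip (\<lambda>y. (\<lambda>_. 1) y * (\<Sum>i<n. b i y * h i y) + b n y * h n y) g x
      = 1 * cip (\<lambda>y. \<Sum>i<n. b i y * h i y) g x + b n x * cip (h n) g x"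
    by (rule cip_lin2[OF S _ g]) (use Suc.prems in auto)
  moreover have "AE x in M. cip (\<lambda>y. \<Sum>i<n. b i y * h i y) g x = (\<Sum>i<n. b i x * cip (h i) g x)"
    by (rule Suc.IH) (use Suc.prems in auto)
  ultimately show ?case
    by eventually_elim simp_all
qed

definition cc :: "('a \<Rightarrow> complex) \<Rightarrow> ('a \<Rightarrow> complex) \<Rightarrow> 'a \<Rightarrow> complex" where
  "cc g h x = (if Qn g x = 0 then 0 else cip h g x / complex_of_real (Qn g x))"

definition PP :: "('a \<Rightarrow> complex) \<Rightarrow> ('a \<Rightarrow> complex) \<Rightarrow> 'a \<Rightarrow> complex" where
  "PP g h = (\<lambda>y. h y - cc g h y * g y)"

lemma cc_meas[measurable]: "cc g h \<in> borel_measurable F"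
  unfolding cc_def[abs_def] by measurable

lemma PP_L2: "g \<in> L2_cond M F \<Longrightarrow> h \<in> L2_cond M F \<Longrightarrow> PP g h \<in> L2_cond M F"
  unfolding PP_def by (rule L2_diff, assumption, rule L2_cmult) simp_all

lemma PP_orth:
  assumes g: "g \<in> L2_cond M F" and h: "h \<in> L2_cond M F" shows "AE x in M. cip (PP g h) g x = 0"
proof -
  have "AE x in M. cip (\<lambda>y. (\<lambda>_. 1) y * h y + (\<lambda>y. - cc g h y) y * g y) g x = 1 * cip h g x + - cc g h x * cip g g x"
    by (rule cip_lin2[OF h g g]) simp_all
  moreover have "(\<lambda>y. (\<lambda>_. 1) y * h y + (\<lambda>y. - cc g h y) y * g y) = PP g h"
    by (auto simp: PP_def)
  ultimately have 1: "AE x in M. cip (PP g h) g x = cip h g x - cc g h x * cip g g x" by simp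
  from 1 cip_self[OF g] cip_zero[OF h g] show ?thesis
    by eventually_elim (auto simp: cc_def)
qed

lemma step_dd:
  fixes m :: nat
  assumes gs': "set gs' \<subseteq> L2_cond M F" and g: "g \<in> L2_cond M F" and f: "f \<in> L2_cond M F"
    and a: "\<forall>i<Suc m. a i \<in> borel_measurable F" and len: "length gs' = m"
    and hm[measurable]: "h \<in> borel_measurable M" and hx: "AE x in M. h x = (\<Sum>i<Suc m. a i x * ((g # gs') ! i) x)"
  shows "dd (\<lambda>y. (\<Sum>i<m. a (Suc i) y * PP g (gs' ! i) y) - PP g f y) \<le> dd (\<lambda>y. h y - f y)"
proof -
  have gi: "gs' ! i \<in> L2_cond M F" if "i < m" for i using gs' that len by auto
  have ai[measurable]: "a i \<in> borel_measurable F" if "i < Suc m" for i using a that by auto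
  define S where "S = (\<lambda>y. \<Sum>i<m. a (Suc i) y * PP g (gs' ! i) y)"
  define E where "E = (\<lambda>y. S y - PP g f y)"
  define D where "D = (\<lambda>y. h y - f y)"
  define \<beta> where "\<beta> = (\<lambda>y. a 0 y + (\<Sum>i<m. a (Suc i) y * cc g (gs' ! i) y) - cc g f y)"
  have S: "S \<in> L2_cond M F" unfolding S_def
    by (rule L2_sum) (auto intro: PP_L2[OF g] gi)
  have PPf: "PP g f \<in> L2_cond M F" by (rule PP_L2[OF g f])
  have E: "E \<in> L2_cond M F" unfolding E_def by (rule L2_diff[OF S PPf])
  have hL: "h \<in> L2_cond M F"
  proof (rule modL_L2[of "g # gs'"])
    show "set (g # gs') \<subseteq> L2_cond M F" using g gs' by auto
    show "h \<in> modL (g # gs')" unfolding modL_def using hm hx a len by (simp only: length_Cons) blast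
  qed
  have D: "D \<in> L2_cond M F" unfolding D_def by (rule L2_diff[OF hL f])
  have \<beta>m[measurable]: "\<beta> \<in> borel_measurable F"
    unfolding \<beta>_def by (measurable; (rule ai; simp)?)
  have DE: "AE x in M. D x = E x + \<beta> x * g x"
    using hx
  proof eventually_elim
    case (elim x)
    then have hx': "h x = a 0 x * g x + (\<Sum>i<m. a (Suc i) x * (gs' ! i) x)"
      by (simp only: sum.lessThan_Suc_shift nth_Cons_0 nth_Cons_Suc)
    have "E x + \<beta> x * g x = (\<Sum>i<m. a (Suc i) x * ((gs' ! i) x - cc g (gs' ! i) x * g x)) - (f x - cc g f x * g x)
       + (a 0 x + (\<Sum>i<m. a (Suc i) x * cc g (gs' ! i) x) - cc g f x) * g x"
      by (simp add: E_def S_def PP_def \<beta>_def)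
    also have "\<dots> = a 0 x * g x + (\<Sum>i<m. a (Suc i) x * (gs' ! i) x) - f x"
      by (simp add: algebra_simps sum_subtractf sum_distrib_right sum_distrib_left sum.distrib)
    finally show ?case by (simp add: D_def hx')
  qed
  have "AE x in M. \<forall>i. i < m \<longrightarrow> cip (PP g (gs' ! i)) g x = 0"
    by (subst AE_all_countable) (auto intro: AE_mp[OF PP_orth[OF g gi]])
  moreover have "AE x in M. cip S g x = (\<Sum>i<m. a (Suc i) x * cip (PP g (gs' ! i)) g x)"
    unfolding S_def by (rule cip_sum[OF _ _ g]) (auto intro: PP_L2[OF g] gi)
  ultimately have cS: "AE x in M. cip S g x = 0"
    by eventually_elim simp
  have "AE x in M. cip (\<lambda>y. (\<lambda>_. 1) y * S y + (\<lambda>_. -1) y * PP g f y) g x = 1 * cip S g x + (-1) * cip (PP g f) g x"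
    by (rule cip_lin2[OF S PPf g]) simp_all
  moreover have "(\<lambda>y. (\<lambda>_. 1) y * S y + (\<lambda>_. -1) y * PP g f y) = E" by (auto simp: E_def)
  ultimately have "AE x in M. cip E g x = 1 * cip S g x + (-1) * cip (PP g f) g x" by simp
  with cS PP_orth[OF g f] have cE: "AE x in M. cip E g x = 0"
    by eventually_elim simp
  have "AE x in M. Qn D x = Qn (\<lambda>y. E y + \<beta> y * g y) x"
    by (rule Qn_cong) (use D DE L2_add[OF E L2_cmult[OF g \<beta>m]] in \<open>auto simp: L2_cond_def\<close>)
  with pythag[OF E g \<beta>m] cE have "AE x in M. Qn E x \<le> Qn D x"
    by eventually_elim (simp add: Qn_nonneg)
  from dd_mono[OF D E this] show ?thesis by (simp add: E_def S_def D_def)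
qed

lemma mainL:
  fixes n :: nat
  shows "\<forall>gs. length gs = n \<longrightarrow> set gs \<subseteq> L2_cond M F \<longrightarrow> (\<forall>fs f. (\<forall>k. fs k \<in> modL gs) \<longrightarrow> f \<in> L2_cond M F
          \<longrightarrow> (\<lambda>k. dd (\<lambda>y. fs k y - f y)) \<longlonglongrightarrow> 0 \<longrightarrow> f \<in> modL gs)"
proof (induction n)
  case 0
  show ?case
  proof (intro allI impI)
    fix gs :: "('a \<Rightarrow> complex) list" and fs f
    assume gs: "length gs = 0" "set gs \<subseteq> L2_cond M F" and fs: "\<forall>k. fs k \<in> modL gs"
      and f: "f \<in> L2_cond M F" and lim: "(\<lambda>k. dd (\<lambda>y. fs k y - f y)) \<longlonglongrightarrow> 0"
    have [measurable]: "f \<in> borel_measurable M" using f by (simp add: L2_cond_def)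
    have eq: "dd (\<lambda>y. fs k y - f y) = dd (\<lambda>y. 0 - f y)" for k
    proof (rule dd_cong)
      have fk: "fs k \<in> L2_cond M F" by (rule modL_L2[OF gs(2)]) (use fs in auto)
      show "(\<lambda>y. fs k y - f y) \<in> L2_cond M F" by (rule L2_diff[OF fk f])
      show "(\<lambda>y. 0 - f y) \<in> L2_cond M F" by (rule L2_diff[OF L2_zero f])
      have "AE x in M. fs k x = 0" using fs gs(1) by (auto simp: modL_def)
      then show "AE x in M. fs k x - f x = 0 - f x" by eventually_elim simp
    qed
    have "(\<lambda>k. dd (\<lambda>y. 0 - f y)) \<longlonglongrightarrow> 0" using lim unfolding eq .
    then have "dd (\<lambda>y. 0 - f y) = 0" by (simp add: LIMSEQ_const_iff)
    then have "AE x in M. 0 - f x = 0" by (rule dd_zero[OF L2_diff[OF L2_zero f]])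
    then have "AE x in M. f x = (\<Sum>i<length gs. (\<lambda>_ _. 0) i x * (gs ! i) x)"
      unfolding gs(1) by eventually_elim simp
    then show "f \<in> modL gs" unfolding modL_def by (auto intro!: exI[of _ "\<lambda>_ _. 0"])
  qed
next
  case (Suc n)
  show ?case
  proof (intro allI impI)
    fix gs :: "('a \<Rightarrow> complex) list" and fs f
    assume gs: "length gs = Suc n" "set gs \<subseteq> L2_cond M F" and fs: "\<forall>k. fs k \<in> modL gs"
      and f: "f \<in> L2_cond M F" and lim: "(\<lambda>k. dd (\<lambda>y. fs k y - f y)) \<longlonglongrightarrow> 0"
    obtain g gs' where gg: "gs = g # gs'" using gs(1) by (cases gs) auto
    have len: "length gs' = n" using gs(1) gg by simp
    have g: "g \<in> L2_cond M F" and gs': "set gs' \<subseteq> L2_cond M F" using gs(2) gg by auto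
    have gi: "gs' ! i \<in> L2_cond M F" if "i < n" for i using gs' that len by auto
    have [measurable]: "f \<in> borel_measurable M" using f by (simp add: L2_cond_def)
    have "\<forall>k. \<exists>a. (\<forall>i<Suc n. a i \<in> borel_measurable F) \<and> (AE x in M. fs k x = (\<Sum>i<Suc n. a i x * (gs ! i) x))"
      using fs gs(1) by (auto simp: modL_def)
    then have "\<exists>A. \<forall>k. (\<forall>i<Suc n. A k i \<in> borel_measurable F) \<and> (AE x in M. fs k x = (\<Sum>i<Suc n. A k i x * (gs ! i) x))"
      by (rule choice)
    then obtain A where A0: "\<forall>k. (\<forall>i<Suc n. A k i \<in> borel_measurable F) \<and> (AE x in M. fs k x = (\<Sum>i<Suc n. A k i x * (gs ! i) x))"
      by blast
    have A: "\<And>k. \<forall>i<Suc n. A k i \<in> borel_measurable F"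
      "\<And>k. AE x in M. fs k x = (\<Sum>i<Suc n. A k i x * (gs ! i) x)"
      using A0 by blast+
    have fsm[measurable]: "fs k \<in> borel_measurable M" for k using fs by (auto simp: modL_def)
    define fs' where "fs' k = (\<lambda>y. \<Sum>i<n. A k (Suc i) y * PP g (gs' ! i) y)" for k
    define gs'' where "gs'' = map (PP g) gs'"
    have L'': "length gs'' = n" "set gs'' \<subseteq> L2_cond M F"
      using len gs' PP_L2[OF g] by (auto simp: gs''_def)
    have fs'L: "fs' k \<in> L2_cond M F" for k
      unfolding fs'_def by (rule L2_sum) (use A(1) in \<open>auto intro: PP_L2[OF g] gi\<close>)
    have fs'mod: "fs' k \<in> modL gs''" for k
      unfolding modL_def
    proof (intro CollectI conjI exI[of _ "\<lambda>i. A k (Suc i)"] allI impI AE_I2)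
      show "fs' k \<in> borel_measurable M" using fs'L[of k] by (simp add: L2_cond_def)
      fix i assume "i < length gs''" then show "A k (Suc i) \<in> borel_measurable F" using A(1)[of k] L''(1) by auto
    next
      fix x show "fs' k x = (\<Sum>i<length gs''. A k (Suc i) x * (gs'' ! i) x)"
        unfolding fs'_def L''(1) by (rule sum.cong) (auto simp: gs''_def len)
    qed
    have PPf: "PP g f \<in> L2_cond M F" by (rule PP_L2[OF g f])
    have le: "dd (\<lambda>y. fs' k y - PP g f y) \<le> dd (\<lambda>y. fs k y - f y)" for k
      unfolding fs'_def
      by (rule step_dd[OF gs' g f A(1) len fsm]) (use A(2)[of k] gg in simp)
    have lim': "(\<lambda>k. dd (\<lambda>y. fs' k y - PP g f y)) \<longlonglongrightarrow> 0"
      by (rule tendsto_sandwich[of "\<lambda>_. 0" _ _ "\<lambda>k. dd (\<lambda>y. fs k y - f y)"])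
         (auto intro: always_eventually dd_nonneg le lim)
    have "PP g f \<in> modL gs''"
      using Suc.IH[rule_format, OF L''(1,2), of fs', OF fs'mod PPf lim'] .
    then obtain b where b: "\<forall>i<n. b i \<in> borel_measurable F"
      and bx: "AE x in M. PP g f x = (\<Sum>i<n. b i x * (gs'' ! i) x)"
      using L''(1) by (auto simp: modL_def)
    define a' where "a' = case_nat (\<lambda>x. cc g f x - (\<Sum>i<n. b i x * cc g (gs' ! i) x)) b"
    have a'm: "\<forall>i<Suc n. a' i \<in> borel_measurable F"
    proof (intro allI impI)
      fix i assume "i < Suc n"
      show "a' i \<in> borel_measurable F"
      proof (cases i)
        case 0
        have "(\<lambda>x. \<Sum>i<n. b i x * cc g (gs' ! i) x) \<in> borel_measurable F"
          by (rule borel_measurable_sum) (use b in auto)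
        then show ?thesis using 0 by (simp add: a'_def)
      next
        case (Suc j)
        then show ?thesis using b \<open>i < Suc n\<close> by (simp add: a'_def)
      qed
    qed
    have "AE x in M. f x = (\<Sum>i<length gs. a' i x * (gs ! i) x)"
      using bx
    proof eventually_elim
      case (elim x)
      have "f x = PP g f x + cc g f x * g x" by (simp add: PP_def)
      also have "PP g f x = (\<Sum>i<n. b i x * PP g (gs' ! i) x)"
        unfolding elim by (rule sum.cong) (auto simp: gs''_def len)
      also have "\<dots> = (\<Sum>i<n. b i x * (gs' ! i) x) - (\<Sum>i<n. b i x * cc g (gs' ! i) x) * g x"
        by (simp add: PP_def right_diff_distrib sum_subtractf sum_distrib_right mult.assoc)
      finally have "f x = a' 0 x * g x + (\<Sum>i<n. a' (Suc i) x * (gs' ! i) x)"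
        by (simp add: a'_def algebra_simps)
      also have "\<dots> = (\<Sum>i<length gs. a' i x * (gs ! i) x)"
        using gs(1) gg by (simp only: sum.lessThan_Suc_shift nth_Cons_0 nth_Cons_Suc)
      finally show ?case .
    qed
    then show "f \<in> modL gs" using a'm \<open>f \<in> borel_measurable M\<close> unfolding modL_def gs(1) by blast
  qed
qed

lemma sum_set_nth:
  assumes "distinct xs" shows "(\<Sum>g\<in>set xs. \<phi> g) = (\<Sum>i<length xs. \<phi> (xs ! i))"
  by (rule sum.reindex_bij_betw[symmetric]) (rule bij_betw_nth[OF assms], auto)

lemma gen_modL:
  assumes d: "distinct xs" shows "gen_module M F (set xs) = modL xs"
proof
  show "gen_module M F (set xs) \<subseteq> modL xs"
  proof
    fix h assume "h \<in> gen_module M F (set xs)"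
    then have H: "h \<in> borel_measurable M \<and> (\<exists>a. (\<forall>g\<in>set xs. a g \<in> borel_measurable F) \<and>
           (AE x in M. h x = (\<Sum>g\<in>set xs. a g x * g x)))"
      unfolding gen_module_def by (rule CollectD)
    from conjunct2[OF H] obtain a where a: "\<forall>g\<in>set xs. a g \<in> borel_measurable F"
      and ae: "AE x in M. h x = (\<Sum>g\<in>set xs. a g x * g x)" by (elim exE conjE)
    have sx: "(\<Sum>g\<in>set xs. a g x * g x) = (\<Sum>i<length xs. a (xs ! i) x * (xs ! i) x)" for x
      by (rule sum_set_nth[OF d])
    have ae': "AE x in M. h x = (\<Sum>i<length xs. a (xs ! i) x * (xs ! i) x)"
      using ae unfolding sx .
    have a': "\<forall>i<length xs. a (xs ! i) \<in> borel_measurable F" using a by simp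
    show "h \<in> modL xs" unfolding modL_def
      by (intro CollectI conjI exI[of _ "\<lambda>i. a (xs ! i)"] conjunct1[OF H] a' ae')
  qed
next
  show "modL xs \<subseteq> gen_module M F (set xs)"
  proof
    fix h assume "h \<in> modL xs"
    then have H: "h \<in> borel_measurable M \<and> (\<exists>a. (\<forall>i<length xs. a i \<in> borel_measurable F) \<and>
      (AE x in M. h x = (\<Sum>i<length xs. a i x * (xs ! i) x)))"
      unfolding modL_def by (rule CollectD)
    from conjunct2[OF H] obtain a where a: "\<forall>i<length xs. a i \<in> borel_measurable F"
      and ae: "AE x in M. h x = (\<Sum>i<length xs. a i x * (xs ! i) x)" by (elim exE conjE)
    define ix where "ix = inv_into {..<length xs} ((!) xs)"
    have bij: "bij_betw ((!) xs) {..<length xs} (set xs)" by (rule bij_betw_nth[OF d]) auto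
    have ixi: "ix (xs ! i) = i" if "i < length xs" for i
      unfolding ix_def using bij that by (simp add: bij_betw_def inv_into_f_f)
    have ixr: "ix g < length xs" if "g \<in> set xs" for g
    proof -
      have "ix g \<in> {..<length xs}" unfolding ix_def
        by (rule inv_into_into) (use bij that in \<open>simp add: bij_betw_def\<close>)
      then show ?thesis by simp
    qed
    have sx: "(\<Sum>g\<in>set xs. a (ix g) x * g x) = (\<Sum>i<length xs. a i x * (xs ! i) x)" for x
      by (subst sum_set_nth[OF d]) (rule sum.cong, auto simp: ixi)
    have ae': "AE x in M. h x = (\<Sum>g\<in>set xs. a (ix g) x * g x)"
      using ae unfolding sx .
    have a': "\<forall>g\<in>set xs. a (ix g) \<in> borel_measurable F" using a ixr by simp
    show "h \<in> gen_module M F (set xs)" unfolding gen_module_def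
      by (intro CollectI conjI exI[of _ "\<lambda>g. a (ix g)"] conjunct1[OF H] a' ae')
  qed
qed

end

theorem lemma3p4:
  fixes M F :: "'a measure" and G :: "('a \<Rightarrow> complex) set"
  assumes "prob_space M"
    and "subalgebra M F"
    and "finite G"
    and "G \<subseteq> L2_cond M F"
  shows "\<forall>fs f. (\<forall>n. fs n \<in> gen_module M F G) \<longrightarrow> f \<in> L2_cond M F \<longrightarrow>
           (\<lambda>n. d_cond M F (fs n) f) \<longlonglongrightarrow> 0 \<longrightarrow> f \<in> gen_module M F G"
proof -
  interpret cl M F using assms(1,2) by (simp add: cl_def cl_axioms_def)
  obtain xs where xs: "set xs = G" "distinct xs" using finite_distinct_list[OF assms(3)] by blast
  have eq: "gen_module M F G = modL xs" using gen_modL[OF xs(2)] xs(1) by simp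
  have dEq: "d_cond M F h f = dd (\<lambda>y. h y - f y)" for h f by (simp add: d_cond_def dd_def)
  show ?thesis
  proof (intro allI impI)
    fix fs f assume fs: "\<forall>n. fs n \<in> gen_module M F G" and f: "f \<in> L2_cond M F"
      and lim: "(\<lambda>n. d_cond M F (fs n) f) \<longlonglongrightarrow> 0"
    have fs': "\<forall>n. fs n \<in> modL xs" using fs unfolding eq .
    have lim': "(\<lambda>n. dd (\<lambda>y. fs n y - f y)) \<longlonglongrightarrow> 0" using lim unfolding dEq .
    have xsL: "set xs \<subseteq> L2_cond M F" using xs assms(4) by simp
    have "f \<in> modL xs" using mainL[of "length xs", rule_format, of xs, OF refl xsL _ f lim'] fs' by blast
    then show "f \<in> gen_module M F G" unfolding eq .
  qed
qed
end
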